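(* Let $\varphi:G\to T$ be a hyperelliptic morphism of weighted graphs, where $G$ has genus $g$. Then the ramification divisor of $\varphi$ is $$\mathrm{Ram}\,\varphi=\sum_{v\in V(G),\ d_\varphi(v)=2}\big[2g(v)+2-\mathrm{val}_{C_\varphi}(v)\big]\,v .$$ If $G$ and $T$ have no legs, then $\deg\mathrm{Ram}\,\varphi=2g+2$.
   Context: Graphs with legs, weighted graphs, $T_vG$, $\mathrm{val}(v)$, $\chi(v)=2-2g(v)-\mathrm{val}(v)$, and harmonic morphisms $\varphi:G\to T$ with degree function $d_\varphi$ on vertices and half-edges are as usual (a map on vertices and half-edges commuting with root and involution maps, with $d_\varphi(v)=\sum_{h'\in T_vG,\varphi(h')=h}d_\varphi(h')$ for every $h\in T_{\varphi(v)}T$); finite means $d_\varphi>0$ on all half-edges. The ramification degree at $v$ is $\mathrm{Ram}_\varphi(v)=d_\varphi(v)\chi(\varphi(v))-\chi(v)$ and $\mathrm{Ram}\,\varphi=\sum_v\mathrm{Ram}_\varphi(v)v$. A hyperelliptic morphism is a finite harmonic morphism $\varphi:G\to T$ of degree $2$ onto a weighted graph $T$ of genus $0$ such that $d_\varphi(v)=2$ for every vertex $v$ of $G$ with $g(v)>0$. The dilation subgraph $C_\varphi$ consists of the vertices and half-edges of $G$ on which $d_\varphi=2$ (equivalently, of $T$ having exactly one preimage); $\mathrm{val}_{C_\varphi}(v)$ is the number of half-edges rooted at $v$ on which $d_\varphi=2$. *)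

theory Defs
  imports Main
begin

text \<open>A finite weighted graph with legs: vertices, half-edges, root map,
involution on half-edges (fixed points are legs), and a vertex weight (genus).\<close>

record ('v, 'h) wgraph =
  verts :: "'v set"
  halfs :: "'h set"
  root  :: "'h \<Rightarrow> 'v"
  invo  :: "'h \<Rightarrow> 'h"
  wt    :: "'v \<Rightarrow> nat"

definition adjacent :: "('v, 'h) wgraph \<Rightarrow> 'v \<Rightarrow> 'v \<Rightarrow> bool" where
  "adjacent G v w \<longleftrightarrow> (\<exists>h\<in>halfs G. root G h = v \<and> root G (invo G h) = w)"

definition wf_graph :: "('v, 'h) wgraph \<Rightarrow> bool" where
  "wf_graph G \<longleftrightarrow> finite (verts G) \<and> finite (halfs G) \<and> verts G \<noteq> {}
     \<and> (\<forall>h\<in>halfs G. root G h \<in> verts G \<and> invo G h \<in> halfs G \<and> invo G (invo G h) = h)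
     \<and> (\<forall>v\<in>verts G. \<forall>w\<in>verts G. (adjacent G)\<^sup>*\<^sup>* v w)"

definition legs :: "('v, 'h) wgraph \<Rightarrow> 'h set" where
  "legs G = {h \<in> halfs G. invo G h = h}"

definition edges :: "('v, 'h) wgraph \<Rightarrow> 'h set set" where
  "edges G = {{h, invo G h} | h. h \<in> halfs G \<and> invo G h \<noteq> h}"

text \<open>Genus of a (connected) weighted graph: first Betti number plus total weight.\<close>
definition genus :: "('v, 'h) wgraph \<Rightarrow> int" where
  "genus G = int (card (edges G)) - int (card (verts G)) + 1 + (\<Sum>v\<in>verts G. int (wt G v))"

definition tangent :: "('v, 'h) wgraph \<Rightarrow> 'v \<Rightarrow> 'h set" where
  "tangent G v = {h \<in> halfs G. root G h = v}"

definition val :: "('v, 'h) wgraph \<Rightarrow> 'v \<Rightarrow> nat" where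
  "val G v = card (tangent G v)"

definition chi :: "('v, 'h) wgraph \<Rightarrow> 'v \<Rightarrow> int" where
  "chi G v = 2 - 2 * int (wt G v) - int (val G v)"

definition harmonic ::
  "('v, 'h) wgraph \<Rightarrow> ('w, 'k) wgraph \<Rightarrow> ('v \<Rightarrow> 'w) \<Rightarrow> ('h \<Rightarrow> 'k)
   \<Rightarrow> ('v \<Rightarrow> nat) \<Rightarrow> ('h \<Rightarrow> nat) \<Rightarrow> bool" where
  "harmonic G T fv fh dv dh \<longleftrightarrow> wf_graph G \<and> wf_graph T
     \<and> fv ` verts G \<subseteq> verts T \<and> fh ` halfs G \<subseteq> halfs T
     \<and> (\<forall>h\<in>halfs G. root T (fh h) = fv (root G h))
     \<and> (\<forall>h\<in>halfs G. invo T (fh h) = fh (invo G h))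
     \<and> (\<forall>h\<in>halfs G. dh (invo G h) = dh h)
     \<and> (\<forall>v\<in>verts G. \<forall>h\<in>tangent T (fv v).
          dv v = (\<Sum>h'\<in>{h' \<in> tangent G v. fh h' = h}. dh h'))"

definition finite_morph :: "('v, 'h) wgraph \<Rightarrow> ('h \<Rightarrow> nat) \<Rightarrow> bool" where
  "finite_morph G dh \<longleftrightarrow> (\<forall>h\<in>halfs G. dh h > 0)"

definition morph_degree_is ::
  "('v, 'h) wgraph \<Rightarrow> ('w, 'k) wgraph \<Rightarrow> ('v \<Rightarrow> 'w) \<Rightarrow> ('v \<Rightarrow> nat) \<Rightarrow> nat \<Rightarrow> bool" where
  "morph_degree_is G T fv dv n \<longleftrightarrow>
     (\<forall>w\<in>verts T. (\<Sum>v\<in>{v \<in> verts G. fv v = w}. dv v) = n)"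

definition hyperelliptic ::
  "('v, 'h) wgraph \<Rightarrow> ('w, 'k) wgraph \<Rightarrow> ('v \<Rightarrow> 'w) \<Rightarrow> ('h \<Rightarrow> 'k)
   \<Rightarrow> ('v \<Rightarrow> nat) \<Rightarrow> ('h \<Rightarrow> nat) \<Rightarrow> bool" where
  "hyperelliptic G T fv fh dv dh \<longleftrightarrow> harmonic G T fv fh dv dh \<and> finite_morph G dh
     \<and> morph_degree_is G T fv dv 2 \<and> genus T = 0
     \<and> (\<forall>v\<in>verts G. wt G v > 0 \<longrightarrow> dv v = 2)"

text \<open>Ramification degree at v (the coefficient of v in Ram).\<close>
definition ram ::
  "('v, 'h) wgraph \<Rightarrow> ('w, 'k) wgraph \<Rightarrow> ('v \<Rightarrow> 'w) \<Rightarrow> ('v \<Rightarrow> nat) \<Rightarrow> 'v \<Rightarrow> int" where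
  "ram G T fv dv v = int (dv v) * chi T (fv v) - chi G v"

text \<open>Valence of v in the dilation subgraph.\<close>
definition val_dil :: "('v, 'h) wgraph \<Rightarrow> ('h \<Rightarrow> nat) \<Rightarrow> 'v \<Rightarrow> nat" where
  "val_dil G dh v = card {h \<in> tangent G v. dh h = 2}"

end

theory Submission
  imports Defs
begin

lemma edges_lb:
  assumes wf: "wf_graph G"
  shows "card (verts G) \<le> card (edges G) + 1"
proof -
  have fin: "finite (verts G)" "finite (halfs G)" and ne: "verts G \<noteq> {}"
    and hw: "\<And>h. h \<in> halfs G \<Longrightarrow> root G h \<in> verts G \<and> invo G h \<in> halfs G \<and> invo G (invo G h) = h"
    and conn: "\<And>v w. v \<in> verts G \<Longrightarrow> w \<in> verts G \<Longrightarrow> (adjacent G)\<^sup>*\<^sup>* v w"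
    using wf by (auto simp: wf_graph_def)
  obtain r where r: "r \<in> verts G" using ne by blast
  define A where "A = adjacent G"
  define d where "d v = (LEAST n. (A ^^ n) r v)" for v
  have ex: "\<exists>n. (A^^n) r v" if "v \<in> verts G" for v
    using conn[OF r that] by (simp add: A_def rtranclp_power)
  have dmin: "d v \<le> n" if "(A^^n) r v" for v n
    using that by (simp add: d_def Least_le)
  have dreach: "(A^^(d v)) r v" if "v \<in> verts G" for v
    unfolding d_def using ex[OF that] by (rule LeastI_ex)
  have step: "\<exists>h. h \<in> halfs G \<and> root G h = v \<and> d (root G (invo G h)) + 1 = d v"
    if v: "v \<in> verts G" "v \<noteq> r" for v
  proof -
    have "d v \<noteq> 0"
    proof
      assume "d v = 0"
      then have "(A^^0) r v" using dreach[OF v(1)] by simp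
      then show False using v(2) by simp
    qed
    then obtain m where m: "d v = Suc m" by (cases "d v") auto
    then have "(A^^Suc m) r v" using dreach[OF v(1)] by simp
    then obtain u where u1: "(A^^m) r u" and u2: "A u v" by (rule relpowp_Suc_E)
    from u2 obtain h where h: "h \<in> halfs G" "root G h = u" "root G (invo G h) = v"
      by (auto simp: A_def adjacent_def)
    have uV: "u \<in> verts G" using hw[OF h(1)] h by simp
    have "d u \<le> m" using dmin[OF u1] .
    moreover have "(A^^Suc (d u)) r v" using relpowp_Suc_I[OF dreach[OF uV] u2] .
    then have "d v \<le> Suc (d u)" by (rule dmin)
    ultimately have "d u + 1 = d v" using m by simp
    then show ?thesis using hw[OF h(1)] h by (intro exI[of _ "invo G h"]) auto
  qed
  then have "\<forall>v\<in>verts G - {r}. \<exists>h. h \<in> halfs G \<and> root G h = v \<and> d (root G (invo G h)) + 1 = d v"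
    by blast
  then obtain f where f: "\<forall>v\<in>verts G - {r}. f v \<in> halfs G \<and> root G (f v) = v \<and> d (root G (invo G (f v))) + 1 = d v"
    by (rule bchoice[elim_format]) blast
  have f1: "f v \<in> halfs G" and f2: "root G (f v) = v" and f3: "d (root G (invo G (f v))) + 1 = d v"
    if "v \<in> verts G - {r}" for v using f that by auto
  define e where "e v = {f v, invo G (f v)}" for v
  have inj: "inj_on e (verts G - {r})"
  proof (rule inj_onI)
    fix v w assume v: "v \<in> verts G - {r}" and w: "w \<in> verts G - {r}" and eq: "e v = e w"
    from eq have "f v = f w \<or> (f v = invo G (f w) \<and> invo G (f v) = f w)"
      by (auto simp: e_def doubleton_eq_iff)
    then show "v = w"
    proof
      assume fe: "f v = f w"
      have "v = root G (f v)" using f2[OF v] by (rule sym)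
      also have "\<dots> = root G (f w)" using fe by (rule arg_cong)
      also have "\<dots> = w" by (rule f2[OF w])
      finally show ?thesis .
    next
      assume a: "f v = invo G (f w) \<and> invo G (f v) = f w"
      have a1: "invo G (f w) = f v" using conjunct1[OF a] by (rule sym)
      have a2: "invo G (f v) = f w" using conjunct2[OF a] .
      have r1: "root G (invo G (f w)) = v" using a1 f2[OF v] by simp
      have r2: "root G (invo G (f v)) = w" using a2 f2[OF w] by simp
      have "d v + 1 = d w" using f3[OF w] r1 by simp
      moreover have "d w + 1 = d v" using f3[OF v] r2 by simp
      ultimately show ?thesis by simp
    qed
  qed
  have sub: "e ` (verts G - {r}) \<subseteq> edges G"
  proof
    fix x assume "x \<in> e ` (verts G - {r})"
    then obtain v where v: "v \<in> verts G - {r}" and x: "x = e v" by blast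
    have "invo G (f v) \<noteq> f v"
    proof
      assume "invo G (f v) = f v"
      then show False using f2[OF v] f3[OF v] by simp
    qed
    then show "x \<in> edges G" using f1[OF v] x unfolding e_def edges_def by blast
  qed
  have finE: "finite (edges G)"
  proof -
    have "edges G \<subseteq> (\<lambda>h. {h, invo G h}) ` halfs G" by (auto simp: edges_def)
    then show ?thesis using fin(2) finite_surj by blast
  qed
  have "card (verts G - {r}) \<le> card (edges G)"
    using card_inj_on_le[OF inj sub finE] .
  then show ?thesis using r fin(1) by simp
qed

lemma sum_val:
  assumes wf: "wf_graph G"
  shows "(\<Sum>v\<in>verts G. val G v) = card (halfs G)"
proof -
  have fin: "finite (verts G)" "finite (halfs G)"
    and sub: "root G ` halfs G \<subseteq> verts G"
    using wf by (auto simp: wf_graph_def)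
  have "(\<Sum>v\<in>verts G. (\<Sum>h\<in>{h. h \<in> halfs G \<and> root G h = v}. (1::nat))) = (\<Sum>h\<in>halfs G. 1)"
    by (rule sum.group[OF fin(2) fin(1) sub])
  then show ?thesis by (simp add: val_def tangent_def)
qed

lemma halfs_edges:
  assumes wf: "wf_graph G" and nl: "legs G = {}"
  shows "card (halfs G) = 2 * card (edges G)"
proof -
  have fin: "finite (halfs G)"
    and hw: "\<And>h. h \<in> halfs G \<Longrightarrow> invo G h \<in> halfs G \<and> invo G (invo G h) = h"
    using wf by (auto simp: wf_graph_def)
  have nf: "\<And>h. h \<in> halfs G \<Longrightarrow> invo G h \<noteq> h" using nl by (auto simp: legs_def)
  have E: "edges G = (\<lambda>h. {h, invo G h}) ` halfs G"
    using nf by (auto simp: edges_def)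
  have finE: "finite (edges G)" unfolding E using fin by simp
  have U: "\<Union>(edges G) = halfs G"
  proof
    show "\<Union>(edges G) \<subseteq> halfs G" unfolding E using hw by auto
    show "halfs G \<subseteq> \<Union>(edges G)" unfolding E by blast
  qed
  have c2: "\<forall>c\<in>edges G. card c = 2" unfolding E
  proof
    fix c assume "c \<in> (\<lambda>h. {h, invo G h}) ` halfs G"
    then obtain h where h: "h \<in> halfs G" "c = {h, invo G h}" by blast
    have "h \<noteq> invo G h" using nf[OF h(1)] by simp
    then show "card c = 2" using h(2) by simp
  qed
  have dj: "\<forall>c1\<in>edges G. \<forall>c2\<in>edges G. c1 \<noteq> c2 \<longrightarrow> c1 \<inter> c2 = {}"
  proof (intro ballI impI)
    fix c1 c2 assume "c1 \<in> edges G" "c2 \<in> edges G" "c1 \<noteq> c2"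
    then obtain a b where a: "a \<in> halfs G" "c1 = {a, invo G a}" and b: "b \<in> halfs G" "c2 = {b, invo G b}"
      and ne: "{a, invo G a} \<noteq> {b, invo G b}" unfolding E by blast
    have ia: "invo G (invo G a) = a" and ib: "invo G (invo G b) = b" using hw a b by auto
    show "c1 \<inter> c2 = {}"
    proof (rule ccontr)
      assume "c1 \<inter> c2 \<noteq> {}"
      then obtain x where "x \<in> {a, invo G a}" "x \<in> {b, invo G b}" using a b by blast
      then have "a = b \<or> a = invo G b \<or> invo G a = b \<or> invo G a = invo G b" by blast
      then have "{a, invo G a} = {b, invo G b}"
      proof (elim disjE)
        assume "a = b" then show ?thesis by simp
      next
        assume h: "a = invo G b" then have h1: "invo G a = b" using ib by simp
        show ?thesis by (subst h1, subst h, rule insert_commute)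
      next
        assume h1: "invo G a = b" then have h: "a = invo G b" using ia by (metis)
        show ?thesis by (subst h1, subst h, rule insert_commute)
      next
        assume h: "invo G a = invo G b" then have "a = b" using ia ib by metis
        then show ?thesis by simp
      qed
      then show False using ne by simp
    qed
  qed
  have "2 * card (edges G) = card (\<Union>(edges G))"
    using card_partition[of "edges G" 2] finE c2 dj U fin by simp
  then show ?thesis using U by simp
qed

lemma isolated_single:
  assumes wf: "wf_graph G" and v: "v \<in> verts G" and t: "tangent G v = {}"
  shows "verts G = {v}"
proof -
  have conn: "\<And>u. u \<in> verts G \<Longrightarrow> (adjacent G)\<^sup>*\<^sup>* v u"
    using wf v by (auto simp: wf_graph_def)
  have "u = v" if u: "u \<in> verts G" for u
    using conn[OF u]
  proof (cases rule: converse_rtranclpE)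
    case base then show ?thesis by simp
  next
    case (step y)
    then obtain h where "h \<in> halfs G" "root G h = v" by (auto simp: adjacent_def)
    then have "h \<in> tangent G v" by (simp add: tangent_def)
    then show ?thesis using t by simp
  qed
  then show ?thesis using v by blast
qed

lemma count_split:
  fixes g :: "'a \<Rightarrow> 'b" and c :: "'a \<Rightarrow> nat"
  assumes fB: "finite B" and fS: "finite S" and gS: "g ` S \<subseteq> B"
    and k: "\<forall>b\<in>B. (\<Sum>x\<in>{x\<in>S. g x = b}. c x) = k"
    and cb: "\<forall>x\<in>S. 1 \<le> c x \<and> c x \<le> 2"
  shows "card S + card {x\<in>S. c x = 2} = card B * k"
proof -
  have "(\<Sum>x\<in>S. c x) = (\<Sum>x\<in>S. 1 + (if c x = 2 then 1 else 0))"
  proof (rule sum.cong)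
    fix x assume "x \<in> S" then have "1 \<le> c x" "c x \<le> 2" using cb by auto
    then show "c x = 1 + (if c x = 2 then 1 else 0)" by auto
  qed simp
  also have "\<dots> = card S + (\<Sum>x\<in>S. if c x = 2 then 1 else 0)"
    unfolding sum.distrib by simp
  also have "(\<Sum>x\<in>S. if c x = 2 then 1 else 0) = (\<Sum>x\<in>{x\<in>S. c x = 2}. (1::nat))"
    by (rule sum.inter_filter[OF fS, symmetric])
  finally have e1: "(\<Sum>x\<in>S. c x) = card S + card {x\<in>S. c x = 2}" by simp
  have "(\<Sum>b\<in>B. (\<Sum>x\<in>{x. x\<in>S \<and> g x = b}. c x)) = (\<Sum>x\<in>S. c x)"
    by (rule sum.group[OF fS fB gS])
  moreover have "(\<Sum>b\<in>B. (\<Sum>x\<in>{x. x\<in>S \<and> g x = b}. c x)) = (\<Sum>b\<in>B. k)"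
    using k by simp
  ultimately show ?thesis using e1 by simp
qed

theorem proposition5p13:
  fixes G :: "('v, 'h) wgraph" and T :: "('w, 'k) wgraph"
    and fv :: "'v \<Rightarrow> 'w" and fh :: "'h \<Rightarrow> 'k"
    and dv :: "'v \<Rightarrow> nat" and dh :: "'h \<Rightarrow> nat"
  assumes "hyperelliptic G T fv fh dv dh"
  shows "(\<forall>v\<in>verts G. ram G T fv dv v =
            (if dv v = 2 then 2 * int (wt G v) + 2 - int (val_dil G dh v) else 0))
       \<and> (legs G = {} \<and> legs T = {} \<longrightarrow>
            (\<Sum>v\<in>verts G. ram G T fv dv v) = 2 * genus G + 2)"
proof -
  from assms have wfG: "wf_graph G" and wfT: "wf_graph T"
    and fvV: "fv ` verts G \<subseteq> verts T" and fhH: "fh ` halfs G \<subseteq> halfs T"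
    and rootc: "\<forall>h\<in>halfs G. root T (fh h) = fv (root G h)"
    and harm: "\<forall>v\<in>verts G. \<forall>h\<in>tangent T (fv v).
          dv v = (\<Sum>h'\<in>{h' \<in> tangent G v. fh h' = h}. dh h')"
    and fm: "\<forall>h\<in>halfs G. dh h > 0"
    and deg: "\<forall>w\<in>verts T. (\<Sum>v\<in>{v \<in> verts G. fv v = w}. dv v) = 2"
    and gT: "genus T = 0"
    and wtG: "\<forall>v\<in>verts G. wt G v > 0 \<longrightarrow> dv v = 2"
    unfolding hyperelliptic_def harmonic_def finite_morph_def morph_degree_is_def by auto
  have finVG: "finite (verts G)" and finHG: "finite (halfs G)"
    using wfG by (auto simp: wf_graph_def)
  have finVT: "finite (verts T)" and finHT: "finite (halfs T)"
    using wfT by (auto simp: wf_graph_def)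
  have wtT: "wt T w = 0" if w: "w \<in> verts T" for w
  proof -
    have "card (verts T) \<le> card (edges T) + 1" by (rule edges_lb[OF wfT])
    then have "int (card (edges T)) - int (card (verts T)) + 1 \<ge> 0" by simp
    moreover have "int (wt T w) \<le> (\<Sum>v\<in>verts T. int (wt T v))"
      by (rule member_le_sum[OF w]) (auto simp: finVT)
    ultimately have "int (wt T w) \<le> genus T" unfolding genus_def by linarith
    then show ?thesis using gT by simp
  qed
  have dvle: "dv v \<le> 2" if v: "v \<in> verts G" for v
  proof -
    have w: "fv v \<in> verts T" using fvV v by blast
    have "dv v \<le> (\<Sum>u\<in>{u \<in> verts G. fv u = fv v}. dv u)"
      by (rule member_le_sum) (use v finVG in auto)
    then show ?thesis using deg w by simp
  qed
  have dvpos: "dv v \<noteq> 0" if v: "v \<in> verts G" for v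
  proof (cases "tangent G v = {}")
    case True
    then have "verts G = {v}" by (rule isolated_single[OF wfG v])
    then have "{u \<in> verts G. fv u = fv v} = {v}" by auto
    then show ?thesis using deg fvV v by force
  next
    case False
    then obtain h' where h': "h' \<in> tangent G v" by blast
    have hH: "h' \<in> halfs G" and hr: "root G h' = v" using h' by (auto simp: tangent_def)
    have "fh h' \<in> tangent T (fv v)" using fhH hH rootc hr by (auto simp: tangent_def)
    then have e: "dv v = (\<Sum>h''\<in>{h'' \<in> tangent G v. fh h'' = fh h'}. dh h'')" using harm v by blast
    have "dh h' \<le> (\<Sum>h''\<in>{h'' \<in> tangent G v. fh h'' = fh h'}. dh h'')"
      by (rule member_le_sum) (use h' finHG in \<open>auto simp: tangent_def\<close>)
    then show ?thesis using e fm hH by fastforce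
  qed
  have dhle: "dh h' \<le> dv v" if v: "v \<in> verts G" and h': "h' \<in> tangent G v" for v h'
  proof -
    have hH: "h' \<in> halfs G" and hr: "root G h' = v" using h' by (auto simp: tangent_def)
    have "fh h' \<in> tangent T (fv v)" using fhH hH rootc hr by (auto simp: tangent_def)
    then have e: "dv v = (\<Sum>h''\<in>{h'' \<in> tangent G v. fh h'' = fh h'}. dh h'')" using harm v by blast
    have "dh h' \<le> (\<Sum>h''\<in>{h'' \<in> tangent G v. fh h'' = fh h'}. dh h'')"
      by (rule member_le_sum) (use h' finHG in \<open>auto simp: tangent_def\<close>)
    then show ?thesis using e by simp
  qed
  have key: "val G v + val_dil G dh v = val T (fv v) * dv v" if v: "v \<in> verts G" for v
  proof -
    have "card (tangent G v) + card {h \<in> tangent G v. dh h = 2} = card (tangent T (fv v)) * dv v"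
    proof (rule count_split)
      show "finite (tangent T (fv v))" using finHT by (simp add: tangent_def)
      show "finite (tangent G v)" using finHG by (simp add: tangent_def)
      show "fh ` tangent G v \<subseteq> tangent T (fv v)"
        using fhH rootc by (auto simp: tangent_def)
      show "\<forall>b\<in>tangent T (fv v). (\<Sum>x\<in>{x \<in> tangent G v. fh x = b}. dh x) = dv v"
        using harm v by simp
      show "\<forall>x\<in>tangent G v. 1 \<le> dh x \<and> dh x \<le> 2"
      proof
        fix x assume x: "x \<in> tangent G v"
        then have "x \<in> halfs G" by (simp add: tangent_def)
        then have "1 \<le> dh x" using fm by (simp add: Suc_le_eq)
        moreover have "dh x \<le> 2" using dhle[OF v x] dvle[OF v] by simp
        ultimately show "1 \<le> dh x \<and> dh x \<le> 2" by simp
      qed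
    qed
    then show ?thesis by (simp add: val_def val_dil_def)
  qed
  have dil0: "val_dil G dh v = 0" if v: "v \<in> verts G" and d1: "dv v = 1" for v
  proof -
    have "{h \<in> tangent G v. dh h = 2} = {}" using dhle[OF v] d1 by fastforce
    then show ?thesis unfolding val_dil_def by (simp only: card.empty)
  qed
  have part1: "ram G T fv dv v =
            (if dv v = 2 then 2 * int (wt G v) + 2 - int (val_dil G dh v) else 0)"
    if v: "v \<in> verts G" for v
  proof -
    have w: "fv v \<in> verts T" using fvV v by blast
    have chiT: "chi T (fv v) = 2 - int (val T (fv v))" using wtT[OF w] by (simp add: chi_def)
    have k: "int (val G v) + int (val_dil G dh v) = int (val T (fv v)) * int (dv v)"
      using key[OF v] by (metis of_nat_add of_nat_mult)
    have "dv v = 1 \<or> dv v = 2" using dvle[OF v] dvpos[OF v] by linarith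
    then show ?thesis
    proof
      assume d: "dv v = 1"
      then have "wt G v = 0" using wtG v by auto
      then show ?thesis using d k dil0[OF v d] chiT by (simp add: ram_def chi_def)
    next
      assume d: "dv v = 2"
      then show ?thesis using k chiT by (simp add: ram_def chi_def)
    qed
  qed
  have part2: "(\<Sum>v\<in>verts G. ram G T fv dv v) = 2 * genus G + 2"
    if nl: "legs G = {}" "legs T = {}"
  proof -
    have s1: "(\<Sum>v\<in>verts G. int (dv v) * chi T (fv v)) = (\<Sum>w\<in>verts T. 2 * chi T w)"
    proof -
      have "(\<Sum>w\<in>verts T. (\<Sum>v\<in>{v. v \<in> verts G \<and> fv v = w}. int (dv v) * chi T (fv v)))
            = (\<Sum>v\<in>verts G. int (dv v) * chi T (fv v))"
        by (rule sum.group[OF finVG finVT fvV])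
      moreover have "(\<Sum>v\<in>{v. v \<in> verts G \<and> fv v = w}. int (dv v) * chi T (fv v)) = 2 * chi T w"
        if w: "w \<in> verts T" for w
      proof -
        have "(\<Sum>v\<in>{v. v \<in> verts G \<and> fv v = w}. int (dv v) * chi T (fv v))
              = (\<Sum>v\<in>{v. v \<in> verts G \<and> fv v = w}. int (dv v) * chi T w)"
          by (rule sum.cong) auto
        also have "\<dots> = int (\<Sum>v\<in>{v. v \<in> verts G \<and> fv v = w}. dv v) * chi T w"
          by (simp add: sum_distrib_right)
        also have "\<dots> = 2 * chi T w" using deg w by simp
        finally show ?thesis .
      qed
      ultimately show ?thesis by (metis (no_types, lifting) sum.cong)
    qed
    have chisum: "(\<Sum>v\<in>verts X. chi X v) = 2 * int (card (verts X)) - 2 * (\<Sum>v\<in>verts X. int (wt X v)) - 2 * int (card (edges X))"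
      if wfX: "wf_graph X" and nlX: "legs X = {}" for X :: "('a, 'b) wgraph"
    proof -
      have "(\<Sum>v\<in>verts X. chi X v) = (\<Sum>v\<in>verts X. 2 - 2 * int (wt X v) - int (val X v))"
        by (simp add: chi_def)
      also have "\<dots> = 2 * int (card (verts X)) - 2 * (\<Sum>v\<in>verts X. int (wt X v)) - int (\<Sum>v\<in>verts X. val X v)"
        by (simp add: sum_subtractf sum_distrib_left)
      also have "int (\<Sum>v\<in>verts X. val X v) = 2 * int (card (edges X))"
        using sum_val[OF wfX] halfs_edges[OF wfX nlX] by simp
      finally show ?thesis .
    qed
    have cT: "(\<Sum>w\<in>verts T. chi T w) = 2"
      using chisum[OF wfT nl(2)] gT unfolding genus_def by linarith
    have cG: "(\<Sum>v\<in>verts G. chi G v) = 2 - 2 * genus G"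
      using chisum[OF wfG nl(1)] unfolding genus_def by (simp add: algebra_simps)
    have "(\<Sum>v\<in>verts G. ram G T fv dv v) = (\<Sum>v\<in>verts G. int (dv v) * chi T (fv v)) - (\<Sum>v\<in>verts G. chi G v)"
      by (simp add: ram_def sum_subtractf)
    also have "\<dots> = 2 * (\<Sum>w\<in>verts T. chi T w) - (\<Sum>v\<in>verts G. chi G v)"
      using s1 by (simp add: sum_distrib_left)
    finally show ?thesis using cT cG by simp
  qed
  show ?thesis using part1 part2 by blast
qed

end
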